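(* Let $\mathcal M$ satisfy Assumption (A), let $F$ and $\{f_s\}_{s\in\mathcal S}$ be as in the context, and suppose Assumption (I) holds. For $s,s'\in\mathcal S$ define $T^*_{\langle s'|s\rangle}:=f_{s'}\circ f_s^{-1}|_{\mathcal X_s}$ ($\mu_s$-a.e. defined). Then for all $s,s'\in\mathcal S$: 1. $\mu_{\langle s'|s\rangle}(\cdot\mid x)=\delta_{T^*_{\langle s'|s\rangle}(x)}$ for $\mu_s$-almost every $x\in\mathcal X_s$; 2. $\mu_{\langle s'|s\rangle}=(T^*_{\langle s'|s\rangle})_\sharp\mu_s$; 3. $\pi^*_{\langle s'|s\rangle}=(I\times T^*_{\langle s'|s\rangle})_\sharp\mu_s$, where $I$ is the identity.
   Context: Let $(\Omega,\mathcal A,\mathbb P)$ be a probability space. A structural causal model (SCM) $\mathcal M=\langle U,G\rangle$ consists of two disjoint finite index sets $\mathcal I$ (endogenous) and $\mathcal J$ (exogenous), measurable product spaces $\mathcal V=\prod_{i\in\mathcal I}\mathcal V_i\subseteq\mathbb R^{|\mathcal I|}$ and $\mathcal U=\prod_{j\in\mathcal J}\mathcal U_j\subseteq\mathbb R^{|\mathcal J|}$, a random vector $U:\Omega\to\mathcal U$ (its components need not be independent), and for each $i\in\mathcal I$ subsets $\mathrm{Endo}(i)\subseteq\mathcal I$, $\mathrm{Exo}(i)\subseteq\mathcal J$ (endogenous and exogenous parents) and a measurable map $G_i:\mathcal V_{\mathrm{Endo}(i)}\times\mathcal U_{\mathrm{Exo}(i)}\to\mathcal V_i$. A random vector $V:\Omega\to\mathcal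 V$ is a solution of $\mathcal M$ if $V_i=G_i(V_{\mathrm{Endo}(i)},U_{\mathrm{Exo}(i)})$ $\mathbb P$-a.s. for every $i\in\mathcal I$. The graph of $\mathcal M$ has nodes $\mathcal I\cup\mathcal J$ and an edge $k\to l$ iff $l\in\mathcal I$ and $k\in\mathrm{Endo}(l)\cup\mathrm{Exo}(l)$. Assumption (A): the graph of $\mathcal M$ is acyclic; then $\mathcal M$ has a solution, unique up to $\mathbb P$-null sets. For $I\subseteq\mathcal I$ and $v_I\in\mathcal V_I$, the do-intervention $\mathrm{do}(V_I=v_I)$ produces the model $\langle U,\tilde G\rangle$ with $\tilde G_i\equiv v_i$ for $i\in I$ and $\tilde G_i=G_i$ otherwise (same $U$); it is again acyclic, and its solution is denoted $V_{V_I=v_I}$. Standing setting: the solution is $V=(X,S)$ where $X:\Omega\to\mathcal X\subseteq\mathbb R^d$ and $S:\Omega\to\mathcal S$ with $\mathcal S\subset\mathbb R$ finite and $\mathbb P(S=s)>0$ for all $s\in\mathcal S$. $U_X$ denotes the vector of exogenous parents of the components of $X$, and $U_S$ that of $S$. For $s\in\mathcal S$, $X_{S=s}$ denotes the $X$-component of the solution of the model intervened by $\mathrm{do}(S=s)$. Notation: $\mu_s:=\mathcal L(X\mid S=s)$ with support $\mathcal X_s$; $\mu_{S=s}:=\mathcal L(X_{S=s})$; $\mu_{\langle s'|s\rangle}:=\mathcal L(X_{S=s'}\mid S=s)$; $\mu_{\langle s'|s\rangle}(\cdot\mid x):=\mathcal L(X_{S=s'}\mid X=x,S=s)$. The structural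 counterfactual coupling is $\pi^*_{\langle s'|s\rangle}:=\mathcal L\big((X,X_{S=s'})\mid S=s\big)$. Under (A) there is a measurable $F$ with $X=F(S,U_X)$ a.s. and $X_{S=s}=F(s,U_X)$ a.s. for every $s$; set $f_s(u):=F(s,u)$. Assumption (I): the functions $\{f_s\}_{s\in\mathcal S}$ are injective. For a measurable map $T$ and measure $P$, $T_\sharp P:=P\circ T^{-1}$; $(T_1\times T_2)(x):=(T_1(x),T_2(x))$. *)

theory Defs
  imports "HOL-Probability.Probability"
begin

definition event_eq :: "'w measure \<Rightarrow> ('w \<Rightarrow> real) \<Rightarrow> real \<Rightarrow> 'w set" where
  "event_eq M S s = {\<omega> \<in> space M. S \<omega> = s}"

definition cond_space :: "'w measure \<Rightarrow> ('w \<Rightarrow> real) \<Rightarrow> real \<Rightarrow> 'w measure" where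
  "cond_space M S s =
     density M (\<lambda>\<omega>. indicator (event_eq M S s) \<omega> / ennreal (measure M (event_eq M S s)))"

definition cond_law :: "'w measure \<Rightarrow> ('w \<Rightarrow> real) \<Rightarrow> real \<Rightarrow> ('w \<Rightarrow> 'b::topological_space) \<Rightarrow> 'b measure" where
  "cond_law M S s Y = distr (cond_space M S s) borel Y"

definition is_cond_distr ::
  "'w measure \<Rightarrow> ('w \<Rightarrow> 'a::topological_space) \<Rightarrow> ('w \<Rightarrow> 'b::topological_space)
     \<Rightarrow> ('a \<Rightarrow> 'b measure) \<Rightarrow> bool" where
  "is_cond_distr P X Y \<kappa> \<longleftrightarrow>
     \<kappa> \<in> measurable borel (prob_algebra borel) \<and>
     (\<forall>A \<in> sets borel. \<forall>B \<in> sets borel.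
        emeasure P {\<omega> \<in> space P. X \<omega> \<in> A \<and> Y \<omega> \<in> B}
        = (\<integral>\<^sup>+ x \<in> A. emeasure (\<kappa> x) B \<partial>(distr P borel X)))"

definition Tstar :: "(real \<Rightarrow> 'u \<Rightarrow> 'x) \<Rightarrow> 'u set \<Rightarrow> real \<Rightarrow> real \<Rightarrow> 'x \<Rightarrow> 'x" where
  "Tstar F UXsp s s' x = F s' (inv_into UXsp (F s) x)"

end

theory Submission
  imports Defs "HOL-Probability.Probability"
begin

lemma cond_space_facts:
  assumes P: "prob_space M" and Sm: "S \<in> borel_measurable M"
    and pos: "measure M (event_eq M S s) > 0"
  shows "prob_space (cond_space M S s)" and "sets (cond_space M S s) = sets M"
    and "space (cond_space M S s) = space M"
    and "\<And>Q. (AE \<omega> in cond_space M S s. Q \<omega>) \<longleftrightarrow> (AE \<omega> in M. S \<omega> = s \<longrightarrow> Q \<omega>)"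
proof -
  interpret prob_space M by fact
  let ?E = "event_eq M S s"
  have E[measurable]: "?E \<in> sets M" unfolding event_eq_def using Sm by measurable
  have fm[measurable]: "(\<lambda>\<omega>. indicator ?E \<omega> / ennreal (measure M ?E)) \<in> borel_measurable M" by measurable
  show "sets (cond_space M S s) = sets M" unfolding cond_space_def by simp
  show sp: "space (cond_space M S s) = space M" unfolding cond_space_def by simp
  show "\<And>Q. (AE \<omega> in cond_space M S s. Q \<omega>) \<longleftrightarrow> (AE \<omega> in M. S \<omega> = s \<longrightarrow> Q \<omega>)"
  proof -
    fix Q
    have "(AE \<omega> in cond_space M S s. Q \<omega>) \<longleftrightarrow> (AE \<omega> in M. 0 < indicator ?E \<omega> / ennreal (measure M ?E) \<longrightarrow> Q \<omega>)"
      unfolding cond_space_def by (rule AE_density[OF fm])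
    also have "\<dots> \<longleftrightarrow> (AE \<omega> in M. S \<omega> = s \<longrightarrow> Q \<omega>)"
      by (rule AE_cong) (use pos in \<open>auto simp: event_eq_def indicator_def ennreal_zero_less_divide\<close>)
    finally show "(AE \<omega> in cond_space M S s. Q \<omega>) \<longleftrightarrow> (AE \<omega> in M. S \<omega> = s \<longrightarrow> Q \<omega>)" .
  qed
  have "emeasure (cond_space M S s) (space M) = (\<integral>\<^sup>+ \<omega>. indicator ?E \<omega> / ennreal (measure M ?E) * indicator (space M) \<omega> \<partial>M)"
    unfolding cond_space_def by (rule emeasure_density) auto
  also have "\<dots> = (\<integral>\<^sup>+ \<omega>. indicator ?E \<omega> * (1 / ennreal (measure M ?E)) \<partial>M)"
    by (rule nn_integral_cong) (auto simp: indicator_def divide_ennreal_def)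
  also have "\<dots> = emeasure M ?E * (1 / ennreal (measure M ?E))"
    by (simp add: nn_integral_multc)
  also have "\<dots> = 1" using pos
  proof -
    have "ennreal (measure M ?E) * (1 / ennreal (measure M ?E)) = ennreal (measure M ?E) / ennreal (measure M ?E)"
      by (simp add: ennreal_times_divide)
    also have "\<dots> = 1" using pos by (intro ennreal_divide_self) auto
    finally show ?thesis by (simp add: emeasure_eq_measure)
  qed
  finally show "prob_space (cond_space M S s)" by (intro prob_spaceI) (simp add: sp)
qed


lemma countable_Int_stable_generator:
  obtains E :: "'a::second_countable_topology set set" where "countable E" "Int_stable E" "UNIV \<in> E"
    "E \<subseteq> sets borel" "sets borel = sigma_sets UNIV E"
proof -
  obtain B :: "'a set set" where B: "countable B" "topological_basis B"
    using ex_countable_basis by blast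
  define E where "E = (\<lambda>F. \<Inter>F) ` {F. finite F \<and> F \<subseteq> B}"
  have "countable E" unfolding E_def using countable_Collect_finite_subset[OF B(1)] by simp
  moreover have "Int_stable E" unfolding Int_stable_def E_def
  proof (safe)
    fix F G assume "finite F" "F \<subseteq> B" "finite G" "G \<subseteq> B"
    then show "\<Inter>F \<inter> \<Inter>G \<in> (\<lambda>F. \<Inter>F) ` {F. finite F \<and> F \<subseteq> B}"
      by (intro image_eqI[where x="F \<union> G"]) auto
  qed
  moreover have "UNIV \<in> E" unfolding E_def by (intro image_eqI[where x="{}"]) auto
  moreover have Eb: "E \<subseteq> sets borel"
  proof
    fix a assume "a \<in> E"
    then obtain F where F: "finite F" "F \<subseteq> B" "a = \<Inter>F" unfolding E_def by auto
    have "open a" unfolding F(3) using F(1,2) B(2) by (intro open_Inter) (auto simp: topological_basis_open)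
    then show "a \<in> sets borel" by simp
  qed
  moreover have "sets borel = sigma_sets UNIV E"
  proof -
    have sb: "sets borel = sigma_sets UNIV B"
      using borel_eq_countable_basis[OF B] by (metis sets_measure_of top_greatest Pow_UNIV)
    show ?thesis unfolding sb
    proof (rule sigma_sets_eqI)
      fix a assume "a \<in> B" then show "a \<in> sigma_sets UNIV E"
        unfolding E_def by (intro sigma_sets.Basic image_eqI[where x="{a}"]) auto
    next
      fix a assume "a \<in> E" then show "a \<in> sigma_sets UNIV B" using Eb sb by auto
    qed
  qed
  ultimately show ?thesis using that by blast
qed

lemma eq_return_generator:
  fixes N :: "'a::topological_space measure" and E :: "'a set set"
  assumes "Int_stable E" "UNIV \<in> E" "sets borel = sigma_sets UNIV E" "sets N = sets borel"
    and "\<And>B. B \<in> E \<Longrightarrow> emeasure N B = emeasure (return borel y) B"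
    and "emeasure N UNIV \<noteq> \<infinity>"
  shows "N = return borel y"
proof (rule measure_eqI_generator_eq_countable[where E=E and \<Omega>=UNIV and A="{UNIV}"])
  show "sets (return borel y) = sigma_sets UNIV E" using assms by simp
qed (use assms in auto)


lemma borel_measurable_fst'[measurable]: "fst \<in> borel_measurable (borel :: ('a::topological_space \<times> 'b::topological_space) measure)"
  by (intro borel_measurable_continuous_onI continuous_intros)
lemma borel_measurable_snd'[measurable]: "snd \<in> borel_measurable (borel :: ('a::topological_space \<times> 'b::topological_space) measure)"
  by (intro borel_measurable_continuous_onI continuous_intros)

lemma construct_T:
  fixes Q :: "'w measure" and U :: "'w \<Rightarrow> 'u::euclidean_space"
    and X Y :: "'w \<Rightarrow> 'x::euclidean_space" and f g :: "'u \<Rightarrow> 'x"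
  assumes Q: "prob_space Q"
    and Um[measurable]: "U \<in> borel_measurable Q" and Xm[measurable]: "X \<in> borel_measurable Q"
    and Ym[measurable]: "Y \<in> borel_measurable Q"
    and Usp[measurable]: "Usp \<in> sets borel"
    and fm: "f \<in> borel_measurable (restrict_space borel Usp)"
    and gm: "g \<in> borel_measurable (restrict_space borel Usp)"
    and inj: "inj_on f Usp"
    and ae: "AE \<omega> in Q. U \<omega> \<in> Usp \<and> X \<omega> = f (U \<omega>) \<and> Y \<omega> = g (U \<omega>)"
  shows "\<exists>T D. T \<in> borel_measurable borel \<and> D \<in> sets borel \<and> D \<subseteq> f ` Usp
     \<and> (\<forall>x\<in>D. T x = g (inv_into Usp f x)) \<and> (AE \<omega> in Q. X \<omega> \<in> D \<and> Y \<omega> = T (X \<omega>))"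
proof -
  interpret Q: prob_space Q by fact
  define f' where "f' = (\<lambda>u. indicator Usp u *\<^sub>R f u)"
  define g' where "g' = (\<lambda>u. indicator Usp u *\<^sub>R g u)"
  have f'm[measurable]: "f' \<in> borel_measurable borel"
    unfolding f'_def using fm borel_measurable_restrict_space_iff[of Usp borel f] by simp
  have g'm[measurable]: "g' \<in> borel_measurable borel"
    unfolding g'_def using gm borel_measurable_restrict_space_iff[of Usp borel g] by simp
  define G where "G = {z :: 'u \<times> 'x \<times> 'x. fst z \<in> Usp \<and> fst (snd z) = f' (fst z) \<and> snd (snd z) = g' (fst z)}"
  have G[measurable]: "G \<in> sets borel" unfolding G_def by measurable
  have Gi: "\<exists>u\<in>Usp. fst (snd z) = f u \<and> snd (snd z) = g u" if "z \<in> G" for z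
    using that unfolding G_def f'_def g'_def by (intro bexI[of _ "fst z"]) auto
  define V where "V = (\<lambda>\<omega>. (U \<omega>, X \<omega>, Y \<omega>))"
  have Vm[measurable]: "V \<in> borel_measurable Q" unfolding V_def by measurable
  define \<rho> where "\<rho> = distr Q borel V"
  interpret \<rho>: prob_space \<rho> unfolding \<rho>_def by (rule Q.prob_space_distr) simp
  have sets\<rho>: "sets \<rho> = sets borel" unfolding \<rho>_def by simp
  have aeG: "AE z in \<rho>. z \<in> G"
    unfolding \<rho>_def
  proof (subst AE_distr_iff)
    show "AE x in Q. V x \<in> G" using ae by eventually_elim (auto simp: V_def G_def f'_def g'_def)
  qed (use G in auto)
  have G1: "measure \<rho> G = 1" using aeG sets\<rho> G by (simp add: \<rho>.prob_eq_1)
  have "\<exists>K. K \<subseteq> G \<and> compact K \<and> 1 - 1 / real (Suc n) < measure \<rho> K" for n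
  proof -
    have "emeasure \<rho> G = (SUP K \<in> {K. K \<subseteq> G \<and> compact K}. emeasure \<rho> K)"
      by (rule inner_regular) (use sets\<rho> G in auto)
    moreover have "ennreal (1 - 1 / real (Suc n)) < emeasure \<rho> G"
      using G1 by (simp add: \<rho>.emeasure_eq_measure ennreal_less_iff)
    ultimately obtain K where K: "K \<subseteq> G" "compact K" "ennreal (1 - 1 / real (Suc n)) < emeasure \<rho> K"
      by (auto simp: less_SUP_iff)
    then have "1 - 1 / real (Suc n) < measure \<rho> K"
      by (simp add: \<rho>.emeasure_eq_measure ennreal_less_iff)
    with K show ?thesis by blast
  qed
  then obtain K where K: "\<And>n. K n \<subseteq> G" "\<And>n. compact (K n)" "\<And>n. 1 - 1 / real (Suc n) < measure \<rho> (K n)"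
    by metis
  have Kb[measurable]: "K n \<in> sets borel" for n using K(2) by (simp add: compact_imp_closed)
  define Ks where "Ks = (\<Union>n. K n)"
  have Ksb[measurable]: "Ks \<in> sets borel" unfolding Ks_def by measurable
  have "measure \<rho> (G - Ks) \<le> 0"
  proof (rule ccontr)
    assume "\<not> measure \<rho> (G - Ks) \<le> 0"
    then obtain m where m: "m > 0" "inverse (real m) < measure \<rho> (G - Ks)"
      using ex_inverse_of_nat_less[of "measure \<rho> (G - Ks)"] by auto
    define n where "n = m"
    have "1 / real (Suc n) \<le> inverse (real m)" using m(1) unfolding n_def
      by (simp add: divide_simps)
    with m have n: "1 / real (Suc n) < measure \<rho> (G - Ks)" by linarith
    have "measure \<rho> (G - Ks) \<le> measure \<rho> (G - K n)"
      by (intro \<rho>.finite_measure_mono) (auto simp: Ks_def sets\<rho>)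
    also have "\<dots> = measure \<rho> G - measure \<rho> (K n)"
      using K(1)[of n] by (intro \<rho>.finite_measure_Diff) (auto simp: sets\<rho>)
    finally show False using K(3)[of n] n G1 by simp
  qed
  then have "G - Ks \<in> null_sets \<rho>"
    by (metis \<rho>.emeasure_eq_measure G Ksb sets.Diff measure_nonneg order_antisym ennreal_0 null_setsI sets\<rho>)
  then have "AE z in \<rho>. z \<notin> G - Ks" by (rule AE_not_in)
  with aeG have "AE z in \<rho>. z \<in> Ks" by eventually_elim auto
  then have aeK: "AE \<omega> in Q. V \<omega> \<in> Ks" unfolding \<rho>_def
    by (subst (asm) AE_distr_iff) auto
  define L where "L n = snd ` K n" for n
  have Lc: "compact (L n)" for n unfolding L_def
    by (intro compact_continuous_image K(2) continuous_intros)
  have Li: "\<exists>u\<in>Usp. x = f u \<and> y = g u" if "(x, y) \<in> L n" for x y n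
    using that Gi K(1) unfolding L_def by force
  define ginv where "ginv x = g (inv_into Usp f x)" for x
  have Lg: "x \<in> f ` Usp \<and> y = ginv x" if "(x, y) \<in> L n" for x y n
    using Li[OF that] inj by (auto simp: ginv_def)
  define D where "D = (\<Union>n. fst ` L n)"
  have Dc: "compact (fst ` L n)" for n by (intro compact_continuous_image Lc continuous_intros)
  have Db[measurable]: "D \<in> sets borel" unfolding D_def
    using Dc by (intro sets.countable_UN) (auto simp: compact_imp_closed)
  have Dsub: "D \<subseteq> f ` Usp" unfolding D_def using Lg by force
  define T where "T x = (if x \<in> D then ginv x else 0)" for x
  have Tclosed: "T -` C \<in> sets borel" if C: "closed C" for C
  proof -
    have "T -` C = (\<Union>n. fst ` (L n \<inter> (UNIV \<times> C))) \<union> (if 0 \<in> C then - D else {})"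
    proof (intro set_eqI iffI)
      fix x assume x: "x \<in> T -` C"
      show "x \<in> (\<Union>n. fst ` (L n \<inter> (UNIV \<times> C))) \<union> (if 0 \<in> C then - D else {})"
      proof (cases "x \<in> D")
        case True
        then obtain n y where "(x, y) \<in> L n" unfolding D_def by force
        with Lg[OF this] x True show ?thesis by (force simp: T_def)
      next
        case False with x show ?thesis by (auto simp: T_def)
      qed
    next
      fix x assume "x \<in> (\<Union>n. fst ` (L n \<inter> (UNIV \<times> C))) \<union> (if 0 \<in> C then - D else {})"
      then show "x \<in> T -` C"
      proof (elim UnE)
        assume "x \<in> (\<Union>n. fst ` (L n \<inter> (UNIV \<times> C)))"
        then obtain n y where xy: "(x, y) \<in> L n" "y \<in> C" by force
        then have "x \<in> D" unfolding D_def by force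
        with Lg[OF xy(1)] xy show ?thesis by (simp add: T_def)
      qed (auto simp: T_def split: if_splits)
    qed
    moreover have "fst ` (L n \<inter> (UNIV \<times> C)) \<in> sets borel" for n
    proof -
      have "compact (fst ` (L n \<inter> (UNIV \<times> C)))"
        by (intro compact_continuous_image compact_Int_closed Lc closed_Times C continuous_intros closed_UNIV)
      then show ?thesis by (simp add: compact_imp_closed)
    qed
    ultimately show ?thesis by (auto intro!: sets.countable_UN)
  qed
  have Tm: "T \<in> borel_measurable borel"
  proof (rule borel_measurableI)
    fix W :: "'x set" assume "open W"
    then have "T -` (- W) \<in> sets borel" by (intro Tclosed) auto
    then have "- (T -` (- W)) \<in> sets borel" by auto
    then show "T -` W \<inter> space borel \<in> sets borel" by (simp add: vimage_Compl)
  qed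
  have "AE \<omega> in Q. X \<omega> \<in> D \<and> Y \<omega> = T (X \<omega>)"
    using aeK
  proof eventually_elim
    case (elim \<omega>)
    then obtain n where "V \<omega> \<in> K n" by (auto simp: Ks_def)
    then have xy: "(X \<omega>, Y \<omega>) \<in> L n" unfolding L_def V_def by force
    then have "X \<omega> \<in> D" unfolding D_def by force
    with Lg[OF xy] show ?case by (simp add: T_def)
  qed
  moreover have "\<forall>x\<in>D. T x = g (inv_into Usp f x)" by (simp add: T_def ginv_def)
  ultimately show ?thesis using Tm Db Dsub by blast
qed
theorem proposition2:
  fixes M :: "'w measure"
    and X :: "'w \<Rightarrow> 'x::euclidean_space"
    and S :: "'w \<Rightarrow> real"
    and SS :: "real set"
    and UX :: "'w \<Rightarrow> 'u::euclidean_space"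
    and UXsp :: "'u set"
    and Xdo :: "real \<Rightarrow> 'w \<Rightarrow> 'x"
    and F :: "real \<Rightarrow> 'u \<Rightarrow> 'x"
  assumes P: "prob_space M"
    and X_meas: "X \<in> borel_measurable M"
    and S_meas: "S \<in> borel_measurable M"
    and SS_fin: "finite SS"
    and S_range: "\<forall>\<omega> \<in> space M. S \<omega> \<in> SS"
    and S_pos: "\<forall>s \<in> SS. measure M (event_eq M S s) > 0"
    and UXsp_borel: "UXsp \<in> sets borel"
    and UX_meas: "UX \<in> borel_measurable M"
    and UX_range: "\<forall>\<omega> \<in> space M. UX \<omega> \<in> UXsp"
    and Xdo_meas: "\<forall>s \<in> SS. Xdo s \<in> borel_measurable M"
    and F_meas: "(\<lambda>(s, u). F s u) \<in> borel_measurable (restrict_space borel (SS \<times> UXsp))"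
    and X_eq: "AE \<omega> in M. X \<omega> = F (S \<omega>) (UX \<omega>)"
    and Xdo_eq: "\<forall>s \<in> SS. AE \<omega> in M. Xdo s \<omega> = F s (UX \<omega>)"
    and inj: "\<forall>s \<in> SS. inj_on (F s) UXsp"
  shows "\<forall>s \<in> SS. \<forall>s' \<in> SS.
     (\<forall>\<kappa>. is_cond_distr (cond_space M S s) X (Xdo s') \<kappa> \<longrightarrow>
        (AE x in cond_law M S s X. \<kappa> x = return borel (Tstar F UXsp s s' x)))
   \<and> (\<exists>T. T \<in> borel_measurable borel
        \<and> (AE x in cond_law M S s X. x \<in> F s ` UXsp \<and> T x = Tstar F UXsp s s' x)
        \<and> cond_law M S s (Xdo s') = distr (cond_law M S s X) borel T
        \<and> cond_law M S s (\<lambda>\<omega>. (X \<omega>, Xdo s' \<omega>))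
            = distr (cond_law M S s X) borel (\<lambda>x. (x, T x)))"
proof (intro ballI)
  fix s s' assume s: "s \<in> SS" and s': "s' \<in> SS"
  interpret M: prob_space M by (rule P)
  note [measurable] = X_meas S_meas UX_meas UXsp_borel
  have Ym[measurable]: "Xdo s' \<in> borel_measurable M" using Xdo_meas s' by blast
  have pos: "measure M (event_eq M S s) > 0" using S_pos s by blast
  note cf = cond_space_facts[OF P S_meas pos]
  define Q where "Q = cond_space M S s"
  have Qp: "prob_space Q" unfolding Q_def by (rule cf(1))
  interpret Q: prob_space Q by (rule Qp)
  have setsQ: "sets Q = sets M" unfolding Q_def by (rule cf(2))
  have XQ[measurable]: "X \<in> borel_measurable Q" using X_meas by (simp add: measurable_cong_sets[OF setsQ refl])
  have YQ[measurable]: "Xdo s' \<in> borel_measurable Q" using Ym by (simp add: measurable_cong_sets[OF setsQ refl])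
  have UQ[measurable]: "UX \<in> borel_measurable Q" using UX_meas by (simp add: measurable_cong_sets[OF setsQ refl])
  have Fm: "F t \<in> borel_measurable (restrict_space borel UXsp)" if t: "t \<in> SS" for t
  proof -
    have "(\<lambda>u. (t, u)) \<in> measurable (restrict_space borel UXsp) (restrict_space borel (SS \<times> UXsp))"
      by (intro measurable_restrict_space3) (auto simp: t)
    from measurable_comp[OF this F_meas] show ?thesis by (simp add: o_def)
  qed
  have injs: "inj_on (F s) UXsp" using inj s by blast
  have aeQ: "AE \<omega> in Q. UX \<omega> \<in> UXsp \<and> X \<omega> = F s (UX \<omega>) \<and> Xdo s' \<omega> = F s' (UX \<omega>)"
    unfolding Q_def cf(4)
  proof -
    have "AE \<omega> in M. Xdo s' \<omega> = F s' (UX \<omega>)" using Xdo_eq s' by blast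
    moreover have "AE \<omega> in M. UX \<omega> \<in> UXsp" using UX_range by (intro AE_I2) auto
    ultimately show "AE \<omega> in M. S \<omega> = s \<longrightarrow> UX \<omega> \<in> UXsp \<and> X \<omega> = F s (UX \<omega>) \<and> Xdo s' \<omega> = F s' (UX \<omega>)"
      using X_eq by eventually_elim auto
  qed
  obtain T D where TDall: "T \<in> borel_measurable borel \<and> D \<in> sets borel \<and> D \<subseteq> F s ` UXsp
     \<and> (\<forall>x\<in>D. T x = F s' (inv_into UXsp (F s) x)) \<and> (AE \<omega> in Q. X \<omega> \<in> D \<and> Xdo s' \<omega> = T (X \<omega>))"
    using construct_T[OF Qp UQ XQ YQ UXsp_borel Fm[OF s] Fm[OF s'] injs aeQ] by (elim exE) (rule that)
  have T[measurable]: "T \<in> borel_measurable borel" using TDall by (elim conjE)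
  have D[measurable]: "D \<in> sets borel" using TDall by (elim conjE)
  have Dsub: "D \<subseteq> F s ` UXsp" using TDall by (elim conjE)
  have TD: "\<forall>x\<in>D. T x = F s' (inv_into UXsp (F s) x)" using TDall by (elim conjE)
  have aeT: "AE \<omega> in Q. X \<omega> \<in> D \<and> Xdo s' \<omega> = T (X \<omega>)" using TDall by (elim conjE)
  define \<mu> where "\<mu> = distr Q borel X"
  have mu: "cond_law M S s X = \<mu>" unfolding \<mu>_def cond_law_def Q_def ..
  interpret mu: prob_space \<mu> unfolding \<mu>_def by (rule Q.prob_space_distr) simp
  have aeD: "AE x in \<mu>. x \<in> D" unfolding \<mu>_def
    by (subst AE_distr_iff) (use aeT in \<open>auto elim!: AE_mp\<close>)
  have aeTs: "AE x in \<mu>. x \<in> F s ` UXsp \<and> T x = Tstar F UXsp s s' x"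
    using aeD by eventually_elim (use Dsub TD in \<open>auto simp: Tstar_def\<close>)
  have law2: "cond_law M S s (Xdo s') = distr \<mu> borel T"
  proof -
    have "cond_law M S s (Xdo s') = distr Q borel (Xdo s')" unfolding cond_law_def Q_def ..
    also have "\<dots> = distr Q borel (\<lambda>\<omega>. T (X \<omega>))"
      by (rule distr_cong_AE) (use aeT in \<open>auto elim!: AE_mp\<close>)
    also have "\<dots> = distr \<mu> borel T" unfolding \<mu>_def by (subst distr_distr) (auto simp: o_def)
    finally show ?thesis .
  qed
  have law3: "cond_law M S s (\<lambda>\<omega>. (X \<omega>, Xdo s' \<omega>)) = distr \<mu> borel (\<lambda>x. (x, T x))"
  proof -
    have "cond_law M S s (\<lambda>\<omega>. (X \<omega>, Xdo s' \<omega>)) = distr Q borel (\<lambda>\<omega>. (X \<omega>, Xdo s' \<omega>))"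
      unfolding cond_law_def Q_def ..
    also have "\<dots> = distr Q borel (\<lambda>\<omega>. (X \<omega>, T (X \<omega>)))"
      by (rule distr_cong_AE) (use aeT in \<open>auto elim!: AE_mp\<close>)
    also have "\<dots> = distr \<mu> borel (\<lambda>x. (x, T x))" unfolding \<mu>_def by (subst distr_distr) (auto simp: o_def)
    finally show ?thesis .
  qed
  have part1: "AE x in cond_law M S s X. \<kappa> x = return borel (Tstar F UXsp s s' x)"
    if kd: "is_cond_distr (cond_space M S s) X (Xdo s') \<kappa>" for \<kappa>
  proof -
    have \<kappa>m: "\<kappa> \<in> measurable borel (prob_algebra borel)" using kd unfolding is_cond_distr_def by blast
    have \<kappa>eq: "\<And>A B. A \<in> sets borel \<Longrightarrow> B \<in> sets borel \<Longrightarrow>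
        emeasure Q {\<omega> \<in> space Q. X \<omega> \<in> A \<and> Xdo s' \<omega> \<in> B} = (\<integral>\<^sup>+ x \<in> A. emeasure (\<kappa> x) B \<partial>\<mu>)"
      using kd unfolding is_cond_distr_def \<mu>_def Q_def by blast
    have \<kappa>s: "\<kappa> \<in> measurable borel (subprob_algebra borel)" using \<kappa>m by (rule measurable_prob_algebraD)
    have aeB: "AE x in \<mu>. emeasure (\<kappa> x) B = indicator B (T x)" if B[measurable]: "B \<in> sets borel" for B
    proof -
      have smu: "sets \<mu> = sets borel" by (simp add: \<mu>_def)
      have fmb: "(\<lambda>x. emeasure (\<kappa> x) B) \<in> borel_measurable borel"
        using measurable_compose[OF \<kappa>s measurable_emeasure_subprob_algebra[OF B]] by (simp add: o_def)
      have fm[measurable]: "(\<lambda>x. emeasure (\<kappa> x) B) \<in> borel_measurable \<mu>"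
        using fmb by (subst measurable_cong_sets[OF smu refl])
      have gmb: "(\<lambda>x. indicator B (T x) :: ennreal) \<in> borel_measurable borel" by measurable
      have gm[measurable]: "(\<lambda>x. indicator B (T x) :: ennreal) \<in> borel_measurable \<mu>"
        using gmb by (subst measurable_cong_sets[OF smu refl])
      have "density \<mu> (\<lambda>x. emeasure (\<kappa> x) B) = density \<mu> (\<lambda>x. indicator B (T x))"
      proof (rule measure_eqI)
        fix A assume "A \<in> sets (density \<mu> (\<lambda>x. emeasure (\<kappa> x) B))"
        then have A[measurable]: "A \<in> sets borel" by (simp add: \<mu>_def)
        have "emeasure (density \<mu> (\<lambda>x. emeasure (\<kappa> x) B)) A = (\<integral>\<^sup>+ x \<in> A. emeasure (\<kappa> x) B \<partial>\<mu>)"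
          by (rule emeasure_density[OF fm]) (simp add: smu)
        also have "\<dots> = emeasure Q {\<omega> \<in> space Q. X \<omega> \<in> A \<and> Xdo s' \<omega> \<in> B}"
          using \<kappa>eq[OF A B] by simp
        also have "\<dots> = emeasure Q {\<omega> \<in> space Q. X \<omega> \<in> A \<inter> T -` B}"
        proof (rule emeasure_eq_AE)
          show "AE \<omega> in Q. (\<omega> \<in> {\<omega> \<in> space Q. X \<omega> \<in> A \<and> Xdo s' \<omega> \<in> B}) = (\<omega> \<in> {\<omega> \<in> space Q. X \<omega> \<in> A \<inter> T -` B})"
            using aeT by eventually_elim auto
        qed measurable
        also have "\<dots> = emeasure \<mu> (A \<inter> T -` B)"
        proof -
          have "emeasure \<mu> (A \<inter> T -` B) = emeasure Q (X -` (A \<inter> T -` B) \<inter> space Q)"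
            unfolding \<mu>_def by (rule emeasure_distr) measurable
          also have "X -` (A \<inter> T -` B) \<inter> space Q = {\<omega> \<in> space Q. X \<omega> \<in> A \<inter> T -` B}" by blast
          finally show ?thesis by simp
        qed
        also have "\<dots> = (\<integral>\<^sup>+ x. indicator (A \<inter> T -` B) x \<partial>\<mu>)"
          by (rule nn_integral_indicator[symmetric]) (simp add: \<mu>_def)
        also have "\<dots> = (\<integral>\<^sup>+ x \<in> A. indicator B (T x) \<partial>\<mu>)"
          by (rule nn_integral_cong) (auto simp: indicator_def)
        also have "\<dots> = emeasure (density \<mu> (\<lambda>x. indicator B (T x))) A"
          by (rule emeasure_density[OF gm, symmetric]) (simp add: smu)
        finally show "emeasure (density \<mu> (\<lambda>x. emeasure (\<kappa> x) B)) A = emeasure (density \<mu> (\<lambda>x. indicator B (T x))) A" .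
      qed simp
      then show ?thesis by (intro mu.density_unique) auto
    qed
    obtain E0 :: "'x set set" where E0: "countable E0" "Int_stable E0" "UNIV \<in> E0"
      "E0 \<subseteq> sets borel" "sets borel = sigma_sets UNIV E0"
      by (rule countable_Int_stable_generator)
    have "AE x in \<mu>. \<forall>B\<in>E0. emeasure (\<kappa> x) B = indicator B (T x)"
      using E0 aeB by (intro AE_ball_countable') auto
    then have "AE x in \<mu>. \<kappa> x = return borel (T x)"
    proof (rule AE_mp, intro AE_I2 impI)
      fix x assume x: "x \<in> space \<mu>" and H: "\<forall>B\<in>E0. emeasure (\<kappa> x) B = indicator B (T x)"
      have kx: "\<kappa> x \<in> space (prob_algebra borel)" using measurable_space[OF \<kappa>m, of x] by simp
      then have sk: "sets (\<kappa> x) = sets borel" and pk: "prob_space (\<kappa> x)" by (auto simp: space_prob_algebra)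
      show "\<kappa> x = return borel (T x)"
      proof (rule eq_return_generator[OF E0(2,3,5) sk])
        fix B assume "B \<in> E0"
        then show "emeasure (\<kappa> x) B = emeasure (return borel (T x)) B"
          using H E0(4) by (subst emeasure_return) auto
      next
        have "emeasure (\<kappa> x) (space (\<kappa> x)) = 1" using pk by (simp add: prob_space.emeasure_space_1)
        moreover have "space (\<kappa> x) = UNIV" using sk by (metis sets_eq_imp_space_eq space_borel)
        ultimately show "emeasure (\<kappa> x) UNIV \<noteq> \<infinity>" by simp
      qed
    qed
    then show ?thesis unfolding mu using aeTs by eventually_elim auto
  qed
  show "(\<forall>\<kappa>. is_cond_distr (cond_space M S s) X (Xdo s') \<kappa> \<longrightarrow>
        (AE x in cond_law M S s X. \<kappa> x = return borel (Tstar F UXsp s s' x)))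
   \<and> (\<exists>T. T \<in> borel_measurable borel
        \<and> (AE x in cond_law M S s X. x \<in> F s ` UXsp \<and> T x = Tstar F UXsp s s' x)
        \<and> cond_law M S s (Xdo s') = distr (cond_law M S s X) borel T
        \<and> cond_law M S s (\<lambda>\<omega>. (X \<omega>, Xdo s' \<omega>))
            = distr (cond_law M S s X) borel (\<lambda>x. (x, T x)))"
    using part1 T aeTs law2 law3 unfolding mu by blast
qed

end
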